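(* Let $f:\mathbb{R}^N\to\mathbb{R}$ be continuous and convex with $\|\partial f\|\le G$ for some choice of subgradient, where $G>0$; let $\mathcal{C}\subset\mathbb{R}^N$ be a nonempty compact convex set and $x_{\mathrm{opt}}\in\mathcal{C}$ a minimizer of the restriction of $f$ to $\mathcal{C}$. Then $f$ restricted to $\mathcal{C}$ and $f+2G\psi_{\mathcal{C}}$ (on all of $\mathbb{R}^N$) have the same minimizer; and if for some $x\in\mathbb{R}^N$ $$f(x)+2G\psi_{\mathcal{C}}(x)-f(x_{\mathrm{opt}})\le\varepsilon,$$ then $\|x-\pi_{\mathcal{C}}(x)\|\le\varepsilon/G$.
   Context: For $x\in\partial\mathcal{C}$ let $S(x)$ be the set of unit vectors $v$ with $\sup_{y\in\mathcal{C}}\langle v,y-x\rangle\le 0$, and define the penalization $\psi_{\mathcal{C}}(y)=\sup_{x\in\partial\mathcal{C},\,v\in S(x)\cup\{0\}}\langle v,y-x\rangle$. $\pi_{\mathcal{C}}$ is the Euclidean projection onto $\mathcal{C}$. *)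

theory Defs
  imports "HOL-Analysis.Analysis"
begin

definition normal_dirs :: "'a::euclidean_space set \<Rightarrow> 'a \<Rightarrow> 'a set" where
  "normal_dirs C x = {v. norm v = 1 \<and> (SUP y\<in>C. inner v (y - x)) \<le> 0}"

definition psiC :: "'a::euclidean_space set \<Rightarrow> 'a \<Rightarrow> real" where
  "psiC C y = Sup {inner v (y - x) | x v. x \<in> frontier C \<and> v \<in> normal_dirs C x \<union> {0}}"

end

theory Submission
  imports Defs
begin

lemma cp_frontier:
  fixes C :: "'a::euclidean_space set"
  assumes "compact C" "C \<noteq> {}" "y \<notin> C"
  shows "closest_point C y \<in> frontier C"
proof (cases "interior C = {}")
  case True
  have "closed C" using assms compact_imp_closed by blast
  then show ?thesis using True closest_point_in_set[OF \<open>closed C\<close> assms(2)]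
    by (simp add: frontier_def)
next
  case False
  have cl: "closed C" using assms compact_imp_closed by blast
  have ah: "affine hull C = UNIV" using affine_hull_nonempty_interior[OF False] .
  have ri: "rel_interior C = interior C" using rel_interior_interior[OF ah] .
  have "closest_point C y \<notin> interior C"
    using closest_point_in_rel_interior[OF cl assms(2), of y] ah ri assms(3) interior_subset by auto
  then show ?thesis using closest_point_in_set[OF cl assms(2)] cl by (simp add: frontier_def)
qed

lemma psi_facts:
  fixes C :: "'a::euclidean_space set"
  assumes "compact C" "C \<noteq> {}" "convex C"
  shows "psiC C y \<ge> norm (y - closest_point C y)"
    and "y \<in> C \<Longrightarrow> psiC C y \<le> 0"
proof -
  let ?S = "\<lambda>y. {inner v (y - x) | x v. x \<in> frontier C \<and> v \<in> normal_dirs C x \<union> {0}}"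
  have cl: "closed C" using assms compact_imp_closed by blast
  have bC: "bounded C" using assms compact_imp_bounded by blast
  have fC: "frontier C \<subseteq> C" using cl by (simp add: frontier_subset_closed)
  obtain B where B: "\<And>x. x \<in> C \<Longrightarrow> norm x \<le> B" using bC bounded_iff by blast
  have bdd: "bdd_above (?S y)" for y
  proof (rule bdd_aboveI[where M="norm y + B"])
    fix t assume "t \<in> ?S y"
    then obtain x v where t: "t = inner v (y - x)" "x \<in> frontier C" "v \<in> normal_dirs C x \<union> {0}" by blast
    have nv: "norm v \<le> 1" using t(3) by (auto simp: normal_dirs_def)
    have "t \<le> norm v * norm (y - x)" using t(1) norm_cauchy_schwarz by blast
    also have "\<dots> \<le> 1 * norm (y - x)" using nv by (intro mult_right_mono) auto
    also have "\<dots> \<le> norm y + B" using B[of x] t(2) fC norm_triangle_ineq4[of y x] by auto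
    finally show "t \<le> norm y + B" .
  qed
  show "psiC C y \<ge> norm (y - closest_point C y)"
  proof (cases "y \<in> C")
    case True
    have "closest_point C y = y" using True closest_point_self by blast
    moreover have "C \<noteq> UNIV" using bC by auto
    then have "frontier C \<noteq> {}" using assms(2) cl
      by (metis frontier_eq_empty)
    then obtain x where "x \<in> frontier C" by blast
    then have "inner 0 (y - x) \<in> ?S y" by blast
    then have "0 \<le> psiC C y" unfolding psiC_def using cSup_upper[OF _ bdd[of y]] by force
    ultimately show ?thesis by simp
  next
    case False
    define p where "p = closest_point C y"
    have pf: "p \<in> frontier C" using cp_frontier[OF assms(1,2) False] p_def by simp
    have pC: "p \<in> C" using p_def closest_point_in_set[OF cl assms(2)] by simp
    have ne: "y - p \<noteq> 0" using pC False by auto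
    define v where "v = (1 / norm (y - p)) *\<^sub>R (y - p)"
    have nv: "norm v = 1" using ne by (simp add: v_def)
    have le: "inner v (z - p) \<le> 0" if "z \<in> C" for z
    proof -
      have "inner (y - p) (z - p) \<le> 0" using closest_point_dot[OF assms(3) cl that] p_def by simp
      then show ?thesis by (simp add: v_def divide_nonpos_nonneg)
    qed
    have "(SUP z\<in>C. inner v (z - p)) \<le> 0"
      using assms(2) le by (intro cSUP_least) auto
    then have "v \<in> normal_dirs C p" using nv by (simp add: normal_dirs_def)
    then have "inner v (y - p) \<in> ?S y" using pf by blast
    then have "inner v (y - p) \<le> psiC C y" unfolding psiC_def using cSup_upper[OF _ bdd[of y]] by force
    moreover have "inner v (y - p) = norm (y - p)" using ne
      by (simp add: v_def power2_norm_eq_inner[symmetric] power2_eq_square)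
    ultimately show ?thesis by (simp add: p_def)
  qed
  assume yC: "y \<in> C"
  show "psiC C y \<le> 0" unfolding psiC_def
  proof (rule cSup_least)
    have "C \<noteq> UNIV" using bC by auto
    then have "frontier C \<noteq> {}" using assms(2) cl by (metis frontier_eq_empty)
    then show "?S y \<noteq> {}" by blast
  next
    fix t assume "t \<in> ?S y"
    then obtain x v where t: "t = inner v (y - x)" "x \<in> frontier C" "v \<in> normal_dirs C x \<union> {0}" by blast
    show "t \<le> 0"
    proof (cases "v = 0")
      case True then show ?thesis using t by simp
    next
      case False
      then have "(SUP z\<in>C. inner v (z - x)) \<le> 0" using t(3) by (auto simp: normal_dirs_def)
      moreover have "bdd_above ((\<lambda>z. inner v (z - x)) ` C)"
      proof (rule bdd_aboveI2)
        fix z assume "z \<in> C"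
        have "inner v (z - x) \<le> norm v * norm (z - x)" by (rule norm_cauchy_schwarz)
        also have "\<dots> = norm (z - x)" using False t(3) by (simp add: normal_dirs_def)
        also have "\<dots> \<le> norm z + norm x" by (rule norm_triangle_ineq4)
        also have "\<dots> \<le> B + norm x" using B[OF \<open>z \<in> C\<close>] by simp
        finally show "inner v (z - x) \<le> B + norm x" .
      qed
      ultimately have "inner v (y - x) \<le> 0"
        using cSUP_upper[OF yC, of "\<lambda>z. inner v (z - x)"] by linarith
      then show ?thesis using t by simp
    qed
  qed
qed

theorem lemma3p4:
  fixes f :: "'a::euclidean_space \<Rightarrow> real" and C :: "'a set"
    and G :: real and xopt :: 'a
  assumes "continuous_on UNIV f" and "convex_on UNIV f"
    and "G > 0"
    and "\<exists>g. \<forall>x. (\<forall>y. f y \<ge> f x + inner (g x) (y - x)) \<and> norm (g x) \<le> G"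
    and "C \<noteq> {}" and "compact C" and "convex C"
    and "xopt \<in> C" and "\<forall>y\<in>C. f xopt \<le> f y"
  shows "{x \<in> C. \<forall>y\<in>C. f x \<le> f y}
           = {x. \<forall>y. f x + 2 * G * psiC C x \<le> f y + 2 * G * psiC C y}
       \<and> (\<forall>y. f xopt + 2 * G * psiC C xopt \<le> f y + 2 * G * psiC C y)
       \<and> (\<forall>x \<epsilon>. f x + 2 * G * psiC C x - f xopt \<le> \<epsilon> \<longrightarrow>
                  norm (x - closest_point C x) \<le> \<epsilon> / G)"
proof -
  obtain g where g: "\<And>x y. f y \<ge> f x + inner (g x) (y - x)" "\<And>x. norm (g x) \<le> G"
    using assms(4) by blast
  have cl: "closed C" using assms compact_imp_closed by blast
  have p0: "\<And>y. y \<in> C \<Longrightarrow> psiC C y = 0"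
    using psi_facts[OF assms(6,5,7)] by (metis antisym norm_zero closest_point_self diff_self)
  have key: "f y + 2 * G * psiC C y \<ge> f xopt + G * norm (y - closest_point C y)" for y
  proof -
    define p where "p = closest_point C y"
    have pC: "p \<in> C" using p_def closest_point_in_set[OF cl assms(5)] by simp
    have "inner (g p) (y - p) \<ge> - (norm (g p) * norm (y - p))"
      using norm_cauchy_schwarz[of "- g p" "y - p"] by simp
    moreover have "norm (g p) * norm (y - p) \<le> G * norm (y - p)"
      using g(2) by (intro mult_right_mono) auto
    ultimately have "f y \<ge> f p - G * norm (y - p)" using g(1)[of p y] by linarith
    moreover have "f p \<ge> f xopt" using assms(9) pC by blast
    moreover have "psiC C y \<ge> norm (y - p)" using psi_facts(1)[OF assms(6,5,7)] p_def by simp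
    moreover have "G * norm (y - p) \<le> G * psiC C y"
      using calculation(3) assms(3) by (intro mult_left_mono) auto
    ultimately show ?thesis unfolding p_def[symmetric] by linarith
  qed
  have A: "\<forall>y. f xopt + 2 * G * psiC C xopt \<le> f y + 2 * G * psiC C y"
  proof
    fix y
    have "G * norm (y - closest_point C y) \<ge> 0" using assms(3) by simp
    moreover have "2 * G * psiC C xopt = 0" using p0[OF assms(8)] by simp
    ultimately show "f xopt + 2 * G * psiC C xopt \<le> f y + 2 * G * psiC C y"
      using key[of y] by linarith
  qed
  have B: "\<forall>x \<epsilon>. f x + 2 * G * psiC C x - f xopt \<le> \<epsilon> \<longrightarrow>
                  norm (x - closest_point C x) \<le> \<epsilon> / G"
  proof (intro allI impI)
    fix x \<epsilon> assume h: "f x + 2 * G * psiC C x - f xopt \<le> \<epsilon>"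
    then have "G * norm (x - closest_point C x) \<le> \<epsilon>" using key[of x] by linarith
    then show "norm (x - closest_point C x) \<le> \<epsilon> / G" using assms(3)
      by (simp add: pos_le_divide_eq mult.commute)
  qed
  have E: "{x \<in> C. \<forall>y\<in>C. f x \<le> f y}
           = {x. \<forall>y. f x + 2 * G * psiC C x \<le> f y + 2 * G * psiC C y}"
  proof (intro equalityI subsetI)
    fix x assume "x \<in> {x \<in> C. \<forall>y\<in>C. f x \<le> f y}"
    then have x: "x \<in> C" "f x \<le> f xopt" using assms(8) by auto
    show "x \<in> {x. \<forall>y. f x + 2 * G * psiC C x \<le> f y + 2 * G * psiC C y}"
    proof (intro CollectI allI)
      fix y
      have "f xopt + 2 * G * psiC C xopt \<le> f y + 2 * G * psiC C y" using A by blast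
      then show "f x + 2 * G * psiC C x \<le> f y + 2 * G * psiC C y"
        using x(2) p0[OF x(1)] p0[OF assms(8)] by simp
    qed
  next
    fix x assume "x \<in> {x. \<forall>y. f x + 2 * G * psiC C x \<le> f y + 2 * G * psiC C y}"
    then have h: "f x + 2 * G * psiC C x \<le> f xopt + 2 * G * psiC C xopt" by blast
    moreover have "2 * G * psiC C xopt = 0" using p0[OF assms(8)] by simp
    ultimately have "G * norm (x - closest_point C x) \<le> 0" using key[of x] by linarith
    then have "norm (x - closest_point C x) = 0" using assms(3)
      by (smt (verit) mult_pos_pos norm_ge_zero)
    then have xC: "x \<in> C" using closest_point_in_set[OF cl assms(5), of x] by simp
    then have "f x \<le> f xopt" using h p0[OF xC] p0[OF assms(8)] by simp
    then show "x \<in> {x \<in> C. \<forall>y\<in>C. f x \<le> f y}" using xC assms(9) by force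
  qed
  show ?thesis using E A B by blast
qed

end
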